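(* Let $T$ be a Grothendieck topology on a category $\mathscr{C}$, and let $\mathrm{Uni}(T)$ denote the singleton Grothendieck topology whose coverings are all universal $T$-locally split morphisms. Then: (a) $\mathrm{Uni}(T)\sim T$; in particular every Grothendieck topology is equivalent to a singleton one. (b) For Grothendieck topologies $T_1,T_2$ on $\mathscr{C}$: $T_1\prec T_2$ if and only if $\mathrm{Uni}(T_1)\subset\mathrm{Uni}(T_2)$, and $T_1\sim T_2$ if and only if $\mathrm{Uni}(T_1)=\mathrm{Uni}(T_2)$. (c) If $T$ is singleton, then $T\subset\mathrm{Uni}(T)$. (d) $\mathrm{Uni}(\mathrm{Uni}(T))=\mathrm{Uni}(T)$.
   Context: A Grothendieck topology $T$ on $\mathscr{C}$ assigns to each object $X$ a set of families $(\pi_i:U_i\to X)_{i\in I}$ ("coverings") such that isomorphisms form singleton coverings, coverings of members of a covering compose to coverings, and coverings pull back (pullbacks existing) along arbitrary morphisms to coverings. It is singleton if all coverings have a one-element index set. A morphism is universal if its pullback along every morphism exists. A morphism $\pi:Y\to X$ is $T$-locally split if there is a covering $(\pi_i:U_i\to X)$ and morphisms $\rho_i:U_i\to Y$ with $\pi\circ\rho_i=\pi_i$. $T_1\prec T_2$ means every universal $T_1$-locally split morphism is $T_2$-locally split; $T_1\sim T_2$ means both $T_1\prec T_2$ and $T_2\prec T_1$. $T_1\subset T_2$ means every $T_1$-covering is a $T_2$-covering. *)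

theory Defs
  imports Main
begin

text \<open>A (possibly large) category given by objects, morphisms, domain, codomain,
  composition (comp g f = g after f, meaningful when cod f = dom g) and identities.\<close>

record ('o, 'm) category =
  Obj :: "'o set"
  Mor :: "'m set"
  dom :: "'m \<Rightarrow> 'o"
  cod :: "'m \<Rightarrow> 'o"
  comp :: "'m \<Rightarrow> 'm \<Rightarrow> 'm"
  ident :: "'o \<Rightarrow> 'm"

definition hom :: "('o, 'm) category \<Rightarrow> 'o \<Rightarrow> 'o \<Rightarrow> 'm set" where
  "hom C X Y = {f \<in> Mor C. dom C f = X \<and> cod C f = Y}"

definition is_category :: "('o, 'm) category \<Rightarrow> bool" where
  "is_category C \<longleftrightarrow>
     (\<forall>f \<in> Mor C. dom C f \<in> Obj C \<and> cod C f \<in> Obj C) \<and>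
     (\<forall>X \<in> Obj C. ident C X \<in> hom C X X) \<and>
     (\<forall>f \<in> Mor C. \<forall>g \<in> Mor C. cod C f = dom C g \<longrightarrow>
        comp C g f \<in> hom C (dom C f) (cod C g)) \<and>
     (\<forall>f \<in> Mor C. \<forall>g \<in> Mor C. \<forall>h \<in> Mor C. cod C f = dom C g \<longrightarrow> cod C g = dom C h \<longrightarrow>
        comp C h (comp C g f) = comp C (comp C h g) f) \<and>
     (\<forall>f \<in> Mor C. comp C (ident C (cod C f)) f = f \<and> comp C f (ident C (dom C f)) = f)"

definition is_iso :: "('o, 'm) category \<Rightarrow> 'm \<Rightarrow> bool" where
  "is_iso C f \<longleftrightarrow> f \<in> Mor C \<and> (\<exists>g \<in> hom C (cod C f) (dom C f).
     comp C g f = ident C (dom C f) \<and> comp C f g = ident C (cod C f))"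

text \<open>is_pullback C f g p q: the square with f : U -> X, g : Y -> X,
  p : P -> Y, q : P -> U is a pullback square
  (so p is the pullback of f along g).\<close>
definition is_pullback :: "('o, 'm) category \<Rightarrow> 'm \<Rightarrow> 'm \<Rightarrow> 'm \<Rightarrow> 'm \<Rightarrow> bool" where
  "is_pullback C f g p q \<longleftrightarrow>
     f \<in> Mor C \<and> g \<in> Mor C \<and> cod C f = cod C g \<and>
     p \<in> hom C (dom C p) (dom C g) \<and> q \<in> hom C (dom C p) (dom C f) \<and>
     comp C f q = comp C g p \<and>
     (\<forall>Z \<in> Obj C. \<forall>a \<in> hom C Z (dom C g). \<forall>b \<in> hom C Z (dom C f).
        comp C f b = comp C g a \<longrightarrow>
        (\<exists>!u. u \<in> hom C Z (dom C p) \<and> comp C p u = a \<and> comp C q u = b))"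

definition has_pullback :: "('o, 'm) category \<Rightarrow> 'm \<Rightarrow> 'm \<Rightarrow> bool" where
  "has_pullback C f g \<longleftrightarrow> (\<exists>p q. is_pullback C f g p q)"

text \<open>A coverage assigns to each object X a set of coverings; a covering of X is a
  family of morphisms with codomain X, represented as a set of morphisms.\<close>
type_synonym ('o, 'm) coverage = "'o \<Rightarrow> 'm set set"

definition is_topology :: "('o, 'm) category \<Rightarrow> ('o, 'm) coverage \<Rightarrow> bool" where
  "is_topology C T \<longleftrightarrow>
     (\<forall>X F. F \<in> T X \<longrightarrow> X \<in> Obj C \<and> (\<forall>f \<in> F. f \<in> Mor C \<and> cod C f = X)) \<and>
     (\<forall>f. is_iso C f \<longrightarrow> {f} \<in> T (cod C f)) \<and>
     (\<forall>X F G. F \<in> T X \<longrightarrow> (\<forall>f \<in> F. G f \<in> T (dom C f)) \<longrightarrow>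
        {comp C f h | f h. f \<in> F \<and> h \<in> G f} \<in> T X) \<and>
     (\<forall>X F g. F \<in> T X \<longrightarrow> g \<in> Mor C \<longrightarrow> cod C g = X \<longrightarrow>
        (\<forall>f \<in> F. has_pullback C f g) \<and>
        (\<forall>p q. (\<forall>f \<in> F. is_pullback C f g (p f) (q f)) \<longrightarrow> p ` F \<in> T (dom C g)))"

definition singleton_cov :: "('o, 'm) coverage \<Rightarrow> bool" where
  "singleton_cov T \<longleftrightarrow> (\<forall>X F. F \<in> T X \<longrightarrow> (\<exists>f. F = {f}))"

definition universal :: "('o, 'm) category \<Rightarrow> 'm \<Rightarrow> bool" where
  "universal C \<pi> \<longleftrightarrow> \<pi> \<in> Mor C \<and> (\<forall>g \<in> Mor C. cod C g = cod C \<pi> \<longrightarrow> has_pullback C \<pi> g)"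

definition locally_split :: "('o, 'm) category \<Rightarrow> ('o, 'm) coverage \<Rightarrow> 'm \<Rightarrow> bool" where
  "locally_split C T \<pi> \<longleftrightarrow> \<pi> \<in> Mor C \<and>
     (\<exists>F \<in> T (cod C \<pi>). \<forall>f \<in> F. \<exists>\<rho> \<in> hom C (dom C f) (dom C \<pi>). comp C \<pi> \<rho> = f)"

definition Uni :: "('o, 'm) category \<Rightarrow> ('o, 'm) coverage \<Rightarrow> ('o, 'm) coverage" where
  "Uni C T X = {{\<pi>} | \<pi>. \<pi> \<in> Mor C \<and> cod C \<pi> = X \<and> universal C \<pi> \<and> locally_split C T \<pi>}"

definition top_prec :: "('o, 'm) category \<Rightarrow> ('o, 'm) coverage \<Rightarrow> ('o, 'm) coverage \<Rightarrow> bool" where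
  "top_prec C T1 T2 \<longleftrightarrow> (\<forall>\<pi>. universal C \<pi> \<and> locally_split C T1 \<pi> \<longrightarrow> locally_split C T2 \<pi>)"

definition top_equiv :: "('o, 'm) category \<Rightarrow> ('o, 'm) coverage \<Rightarrow> ('o, 'm) coverage \<Rightarrow> bool" where
  "top_equiv C T1 T2 \<longleftrightarrow> top_prec C T1 T2 \<and> top_prec C T2 T1"

definition top_subset :: "('o, 'm) coverage \<Rightarrow> ('o, 'm) coverage \<Rightarrow> bool" where
  "top_subset T1 T2 \<longleftrightarrow> (\<forall>X. T1 X \<subseteq> T2 X)"

end

theory Submission
  imports Defs
begin

lemma hom_D: "f \<in> hom C A B \<Longrightarrow> f \<in> Mor C \<and> dom C f = A \<and> cod C f = B"
  by (simp add: hom_def)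
lemma hom_I: "f \<in> Mor C \<Longrightarrow> f \<in> hom C (dom C f) (cod C f)"
  by (simp add: hom_def)
lemma cat_obj: "is_category C \<Longrightarrow> f \<in> Mor C \<Longrightarrow> dom C f \<in> Obj C \<and> cod C f \<in> Obj C"
  by (simp add: is_category_def)
lemma cat_comp: "is_category C \<Longrightarrow> f \<in> hom C A B \<Longrightarrow> g \<in> hom C B D \<Longrightarrow> comp C g f \<in> hom C A D"
  unfolding is_category_def hom_def by auto
lemma cat_assoc: "is_category C \<Longrightarrow> f \<in> hom C A B \<Longrightarrow> g \<in> hom C B D \<Longrightarrow> h \<in> hom C D E \<Longrightarrow>
  comp C h (comp C g f) = comp C (comp C h g) f"
  unfolding is_category_def hom_def by auto
lemma cat_id: "is_category C \<Longrightarrow> A \<in> Obj C \<Longrightarrow> ident C A \<in> hom C A A"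
  unfolding is_category_def by auto
lemma cat_idl: "is_category C \<Longrightarrow> f \<in> hom C A B \<Longrightarrow> comp C (ident C B) f = f"
  unfolding is_category_def hom_def by auto
lemma cat_idr: "is_category C \<Longrightarrow> f \<in> hom C A B \<Longrightarrow> comp C f (ident C A) = f"
  unfolding is_category_def hom_def by auto

lemma pbD:
  assumes "is_pullback C f g p q"
  shows "f \<in> Mor C" "g \<in> Mor C" "cod C f = cod C g"
    "p \<in> hom C (dom C p) (dom C g)" "q \<in> hom C (dom C p) (dom C f)"
    "comp C f q = comp C g p"
  using assms unfolding is_pullback_def by auto

lemma pbE:
  assumes "is_pullback C f g p q" "Z \<in> Obj C" "a \<in> hom C Z (dom C g)" "b \<in> hom C Z (dom C f)"
        "comp C f b = comp C g a"
  shows "\<exists>u. u \<in> hom C Z (dom C p) \<and> comp C p u = a \<and> comp C q u = b"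
  using assms unfolding is_pullback_def by blast

lemma pbU:
  assumes "is_pullback C f g p q" "Z \<in> Obj C" "a \<in> hom C Z (dom C g)" "b \<in> hom C Z (dom C f)"
        "comp C f b = comp C g a"
        "u \<in> hom C Z (dom C p)" "comp C p u = a" "comp C q u = b"
        "u' \<in> hom C Z (dom C p)" "comp C p u' = a" "comp C q u' = b"
  shows "u = u'"
proof -
  have "\<exists>!u. u \<in> hom C Z (dom C p) \<and> comp C p u = a \<and> comp C q u = b"
    using assms(1-5) unfolding is_pullback_def by blast
  thus ?thesis using assms(6-11) by blast
qed

lemma pasting_comp:
  assumes cat: "is_category C" and pb1: "is_pullback C \<pi> g p1 q1" and pb2: "is_pullback C \<sigma> q1 p2 q2"
  shows "is_pullback C (comp C \<pi> \<sigma>) g (comp C p1 p2) q2"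
proof -
  note P1 = pbD[OF pb1] pbE[OF pb1] pbU[OF pb1] and P2 = pbD[OF pb2] pbE[OF pb2] pbU[OF pb2]
  define Y where "Y = dom C \<pi>"
  define X where "X = cod C \<pi>"
  define W where "W = dom C \<sigma>"
  define Zg where "Zg = dom C g"
  define Q1 where "Q1 = dom C p1"
  define Q2 where "Q2 = dom C p2"
  have \<pi>h: "\<pi> \<in> hom C Y X" using P1(1) by (simp add: hom_I Y_def X_def)
  have gh: "g \<in> hom C Zg X" using P1(2,3) hom_I Zg_def X_def by metis
  have p1h: "p1 \<in> hom C Q1 Zg" using P1 by (simp add: Q1_def Zg_def)
  have q1h: "q1 \<in> hom C Q1 Y" using P1 by (simp add: Q1_def Y_def)
  have \<sigma>h: "\<sigma> \<in> hom C W Y" using P2(1,3) q1h by (simp add: hom_def W_def)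
  have p2h: "p2 \<in> hom C Q2 Q1" using P2(4) q1h by (simp add: hom_def Q2_def)
  have q2h: "q2 \<in> hom C Q2 W" using P2 by (simp add: Q2_def W_def)
  have \<pi>\<sigma>h: "comp C \<pi> \<sigma> \<in> hom C W X" using cat_comp[OF cat \<sigma>h \<pi>h] .
  have p12h: "comp C p1 p2 \<in> hom C Q2 Zg" using cat_comp[OF cat p2h p1h] .
  have dom12: "dom C (comp C p1 p2) = Q2" using p12h hom_D by metis
  have eq1: "comp C \<pi> q1 = comp C g p1" using P1 by simp
  have eq2: "comp C \<sigma> q2 = comp C q1 p2" using P2 by simp
  have sq: "comp C (comp C \<pi> \<sigma>) q2 = comp C g (comp C p1 p2)"
  proof -
    have "comp C (comp C \<pi> \<sigma>) q2 = comp C \<pi> (comp C \<sigma> q2)" using cat_assoc[OF cat q2h \<sigma>h \<pi>h] by simp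
    also have "\<dots> = comp C \<pi> (comp C q1 p2)" using eq2 by simp
    also have "\<dots> = comp C (comp C \<pi> q1) p2" using cat_assoc[OF cat p2h q1h \<pi>h] by simp
    also have "\<dots> = comp C (comp C g p1) p2" using eq1 by simp
    also have "\<dots> = comp C g (comp C p1 p2)" using cat_assoc[OF cat p2h p1h gh] by simp
    finally show ?thesis .
  qed
  show ?thesis unfolding is_pullback_def
  proof (intro conjI ballI impI)
    show "comp C \<pi> \<sigma> \<in> Mor C" using \<pi>\<sigma>h hom_D by metis
    show "g \<in> Mor C" using P1 by simp
    show "cod C (comp C \<pi> \<sigma>) = cod C g" using \<pi>\<sigma>h gh hom_D by metis
    show "comp C p1 p2 \<in> hom C (dom C (comp C p1 p2)) (dom C g)" using p12h dom12 Zg_def by simp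
    show "q2 \<in> hom C (dom C (comp C p1 p2)) (dom C (comp C \<pi> \<sigma>))"
      using q2h dom12 \<pi>\<sigma>h hom_D by metis
    show "comp C (comp C \<pi> \<sigma>) q2 = comp C g (comp C p1 p2)" by (rule sq)
    fix Z a b assume Z: "Z \<in> Obj C" and a: "a \<in> hom C Z (dom C g)"
      and b: "b \<in> hom C Z (dom C (comp C \<pi> \<sigma>))" and e: "comp C (comp C \<pi> \<sigma>) b = comp C g a"
    have a': "a \<in> hom C Z Zg" using a Zg_def by simp
    have b': "b \<in> hom C Z W" using b \<pi>\<sigma>h hom_D by metis
    have \<sigma>b: "comp C \<sigma> b \<in> hom C Z Y" using cat_comp[OF cat b' \<sigma>h] .
    have e1: "comp C \<pi> (comp C \<sigma> b) = comp C g a" using e cat_assoc[OF cat b' \<sigma>h \<pi>h] by simp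
    obtain v where v: "v \<in> hom C Z Q1" "comp C p1 v = a" "comp C q1 v = comp C \<sigma> b"
      using P1(7)[OF Z a \<sigma>b[unfolded Y_def]] e1 Q1_def by auto
    have b'': "b \<in> hom C Z (dom C \<sigma>)" using b' W_def by simp
    have v': "v \<in> hom C Z (dom C q1)" using v(1) q1h hom_D by metis
    obtain u where u: "u \<in> hom C Z Q2" "comp C p2 u = v" "comp C q2 u = b"
      using P2(7)[OF Z v' b''] v(3) Q2_def by auto
    show "\<exists>!u. u \<in> hom C Z (dom C (comp C p1 p2)) \<and> comp C (comp C p1 p2) u = a \<and> comp C q2 u = b"
    proof (rule ex1I[of _ u])
      show "u \<in> hom C Z (dom C (comp C p1 p2)) \<and> comp C (comp C p1 p2) u = a \<and> comp C q2 u = b"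
        using u v dom12 cat_assoc[OF cat u(1) p2h p1h] by simp
    next
      fix u' assume H: "u' \<in> hom C Z (dom C (comp C p1 p2)) \<and> comp C (comp C p1 p2) u' = a \<and> comp C q2 u' = b"
      hence u'h: "u' \<in> hom C Z Q2" using dom12 by simp
      have pu': "comp C p2 u' \<in> hom C Z Q1" using cat_comp[OF cat u'h p2h] .
      have x1: "comp C p1 (comp C p2 u') = a" using H cat_assoc[OF cat u'h p2h p1h] by simp
      have x2: "comp C q1 (comp C p2 u') = comp C \<sigma> b"
        using H cat_assoc[OF cat u'h p2h q1h] cat_assoc[OF cat u'h q2h \<sigma>h] eq2 by simp
      have "comp C p2 u' = v"
        using P1(8)[OF Z a \<sigma>b[unfolded Y_def] e1 pu'[unfolded Q1_def] x1 x2 v(1)[unfolded Q1_def] v(2) v(3)] .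
      thus "u' = u"
        using P2(8)[OF Z v' b'' _ u'h[unfolded Q2_def] _ _ u(1)[unfolded Q2_def] u(2) u(3)] v(3) H by simp
    qed
  qed
qed

lemma pasting_stab:
  assumes cat: "is_category C" and pb1: "is_pullback C \<pi> g p q" and hM: "h \<in> Mor C"
    and hc: "cod C h = dom C g" and pb2: "is_pullback C \<pi> (comp C g h) p' q'"
  shows "has_pullback C p h"
proof -
  note P1 = pbD[OF pb1] pbE[OF pb1] pbU[OF pb1] and P2 = pbD[OF pb2] pbE[OF pb2] pbU[OF pb2]
  define Y where "Y = dom C \<pi>"
  define X where "X = cod C \<pi>"
  define Zg where "Zg = dom C g"
  define P where "P = dom C p"
  define Z' where "Z' = dom C h"
  define P' where "P' = dom C p'"
  have \<pi>h: "\<pi> \<in> hom C Y X" using P1(1) by (simp add: hom_I Y_def X_def)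
  have gh: "g \<in> hom C Zg X" using P1(2,3) hom_I Zg_def X_def by metis
  have ph: "p \<in> hom C P Zg" using P1(4) by (simp add: P_def Zg_def)
  have qh: "q \<in> hom C P Y" using P1(5) by (simp add: P_def Y_def)
  have hh: "h \<in> hom C Z' Zg" using hM hc by (simp add: hom_def Z'_def Zg_def)
  have ghh: "comp C g h \<in> hom C Z' X" using cat_comp[OF cat hh gh] .
  have domgh: "dom C (comp C g h) = Z'" using ghh by (simp add: hom_def)
  have p'h: "p' \<in> hom C P' Z'" using P2(4) domgh by (simp add: P'_def)
  have q'h: "q' \<in> hom C P' Y" using P2(5) by (simp add: P'_def Y_def)
  have eq1: "comp C \<pi> q = comp C g p" using P1(6) .
  have eq2: "comp C \<pi> q' = comp C (comp C g h) p'" using P2(6) .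
  have P'O: "P' \<in> Obj C" using p'h cat_obj[OF cat] unfolding hom_def by blast
  have hp': "comp C h p' \<in> hom C P' Zg" using cat_comp[OF cat p'h hh] .
  have e0: "comp C \<pi> q' = comp C g (comp C h p')" using eq2 cat_assoc[OF cat p'h hh gh] by simp
  obtain u where u: "u \<in> hom C P' P" "comp C p u = comp C h p'" "comp C q u = q'"
    using P1(7)[OF P'O hp'[unfolded Zg_def] q'h[unfolded Y_def] e0] P_def by auto
  have "is_pullback C p h p' u" unfolding is_pullback_def
  proof (intro conjI ballI impI)
    show "p \<in> Mor C" using ph by (simp add: hom_def)
    show "h \<in> Mor C" by (rule hM)
    show "cod C p = cod C h" using ph hh by (simp add: hom_def)
    show "p' \<in> hom C (dom C p') (dom C h)" using p'h by (simp add: P'_def Z'_def)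
    show "u \<in> hom C (dom C p') (dom C p)" using u(1) by (simp add: P'_def P_def)
    show "comp C p u = comp C h p'" by (rule u(2))
    fix W a b assume W: "W \<in> Obj C" and a: "a \<in> hom C W (dom C h)" and b: "b \<in> hom C W (dom C p)"
      and e: "comp C p b = comp C h a"
    have a': "a \<in> hom C W Z'" using a Z'_def by simp
    have b': "b \<in> hom C W P" using b P_def by simp
    have qbh: "comp C q b \<in> hom C W Y" using cat_comp[OF cat b' qh] .
    have e1: "comp C \<pi> (comp C q b) = comp C (comp C g h) a"
    proof -
      have "comp C \<pi> (comp C q b) = comp C (comp C \<pi> q) b" using cat_assoc[OF cat b' qh \<pi>h] by simp
      also have "\<dots> = comp C (comp C g p) b" using eq1 by simp
      also have "\<dots> = comp C g (comp C p b)" using cat_assoc[OF cat b' ph gh] by simp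
      also have "\<dots> = comp C g (comp C h a)" using e by simp
      also have "\<dots> = comp C (comp C g h) a" using cat_assoc[OF cat a' hh gh] by simp
      finally show ?thesis .
    qed
    obtain w where w: "w \<in> hom C W P'" "comp C p' w = a" "comp C q' w = comp C q b"
      using P2(7)[OF W a'[folded domgh] qbh[unfolded Y_def] e1] P'_def by auto
    have pbb: "comp C p b \<in> hom C W Zg" using cat_comp[OF cat b' ph] .
    have e3: "comp C \<pi> (comp C q b) = comp C g (comp C p b)"
      using cat_assoc[OF cat b' qh \<pi>h] cat_assoc[OF cat b' ph gh] eq1 by simp
    have uwh: "comp C u w \<in> hom C W P" using cat_comp[OF cat w(1) u(1)] .
    have x1: "comp C p (comp C u w) = comp C p b"
      using cat_assoc[OF cat w(1) u(1) ph] u(2) cat_assoc[OF cat w(1) p'h hh] w(2) e by simp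
    have x2: "comp C q (comp C u w) = comp C q b"
      using cat_assoc[OF cat w(1) u(1) qh] u(3) w(3) by simp
    have uw: "comp C u w = b"
      using P1(8)[OF W pbb[unfolded Zg_def] qbh[unfolded Y_def] e3 uwh[unfolded P_def] x1 x2 b] by simp
    show "\<exists>!w. w \<in> hom C W (dom C p') \<and> comp C p' w = a \<and> comp C u w = b"
    proof (rule ex1I[of _ w])
      show "w \<in> hom C W (dom C p') \<and> comp C p' w = a \<and> comp C u w = b"
        using w uw P'_def by simp
    next
      fix w' assume H: "w' \<in> hom C W (dom C p') \<and> comp C p' w' = a \<and> comp C u w' = b"
      hence w'h: "w' \<in> hom C W P'" using P'_def by simp
      have "comp C q' w' = comp C q b" using cat_assoc[OF cat w'h u(1) qh] u(3) H by simp
      thus "w' = w"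
        using P2(8)[OF W a'[folded domgh] qbh[unfolded Y_def] e1 w'h[unfolded P'_def] _ _ w(1)[unfolded P'_def] w(2) w(3)] H
        by simp
    qed
  qed
  thus ?thesis unfolding has_pullback_def by blast
qed

lemma top_part1: assumes "is_topology C T" shows "\<forall>X F. F \<in> T X \<longrightarrow> X \<in> Obj C \<and> (\<forall>f \<in> F. f \<in> Mor C \<and> cod C f = X)"
  using assms unfolding is_topology_def by (elim conjE) assumption

lemma top_part2: assumes "is_topology C T" shows "\<forall>f. is_iso C f \<longrightarrow> {f} \<in> T (cod C f)"
  using assms unfolding is_topology_def by (elim conjE) assumption

lemma top_part3: assumes "is_topology C T" shows "\<forall>X F G. F \<in> T X \<longrightarrow> (\<forall>f \<in> F. G f \<in> T (dom C f)) \<longrightarrow>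
        {comp C f h | f h. f \<in> F \<and> h \<in> G f} \<in> T X"
  using assms unfolding is_topology_def by (elim conjE) assumption

lemma top_part4: assumes "is_topology C T" shows "\<forall>X F g. F \<in> T X \<longrightarrow> g \<in> Mor C \<longrightarrow> cod C g = X \<longrightarrow>
        (\<forall>f \<in> F. has_pullback C f g) \<and>
        (\<forall>p q. (\<forall>f \<in> F. is_pullback C f g (p f) (q f)) \<longrightarrow> p ` F \<in> T (dom C g))"
  using assms unfolding is_topology_def by (elim conjE) assumption

lemmas top_parts = top_part1 top_part2 top_part3 top_part4

lemma topD1: "is_topology C T \<Longrightarrow> F \<in> T X \<Longrightarrow> X \<in> Obj C \<and> (\<forall>f \<in> F. f \<in> Mor C \<and> cod C f = X)"
  using top_parts(1) by metis
lemma topD2: "is_topology C T \<Longrightarrow> is_iso C f \<Longrightarrow> {f} \<in> T (cod C f)"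
  using top_parts(2) by metis
lemma topD3: assumes "is_topology C T" "F \<in> T X" "(\<And>f. f \<in> F \<Longrightarrow> G f \<in> T (dom C f))"
  shows "{comp C f h | f h. f \<in> F \<and> h \<in> G f} \<in> T X"
proof -
  have "\<forall>f \<in> F. G f \<in> T (dom C f)" using assms(3) by blast
  thus ?thesis using top_parts(3)[OF assms(1), rule_format, OF assms(2)] by blast
qed
lemma topD4a: "is_topology C T \<Longrightarrow> F \<in> T X \<Longrightarrow> g \<in> Mor C \<Longrightarrow> cod C g = X \<Longrightarrow> f \<in> F \<Longrightarrow> has_pullback C f g"
  using top_parts(4) by metis
lemma topD4b: assumes "is_topology C T" "F \<in> T X" "g \<in> Mor C" "cod C g = X"
   "(\<And>f. f \<in> F \<Longrightarrow> is_pullback C f g (p f) (q f))" shows "p ` F \<in> T (dom C g)"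
proof -
  have "\<forall>f \<in> F. is_pullback C f g (p f) (q f)" using assms(5) by blast
  thus ?thesis using top_parts(4)[OF assms(1), rule_format, OF assms(2,3,4)] by blast
qed

lemma univ_pb:
  assumes cat: "is_category C" and u: "universal C \<pi>" and pb: "is_pullback C \<pi> g p q"
  shows "universal C p"
  unfolding universal_def
proof (intro conjI ballI impI)
  note P = pbD[OF pb]
  show "p \<in> Mor C" using P(4) by (simp add: hom_def)
  fix h assume hM: "h \<in> Mor C" and hc: "cod C h = cod C p"
  have hc': "cod C h = dom C g" using hc P(4) by (simp add: hom_def)
  have hh: "h \<in> hom C (dom C h) (dom C g)" using hM hc' by (simp add: hom_def)
  have ghM: "comp C g h \<in> hom C (dom C h) (cod C g)"
    using cat_comp[OF cat hh hom_I[OF P(2)]] by simp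
  hence "has_pullback C \<pi> (comp C g h)" using u P(3) unfolding universal_def hom_def by auto
  then obtain p' q' where "is_pullback C \<pi> (comp C g h) p' q'" unfolding has_pullback_def by blast
  thus "has_pullback C p h" using pasting_stab[OF cat pb hM hc'] by blast
qed

lemma univ_comp:
  assumes cat: "is_category C" and u1: "universal C \<pi>" and u2: "universal C \<sigma>"
    and c: "cod C \<sigma> = dom C \<pi>"
  shows "universal C (comp C \<pi> \<sigma>)"
proof -
  have \<pi>M: "\<pi> \<in> Mor C" and \<sigma>M: "\<sigma> \<in> Mor C" using u1 u2 unfolding universal_def by auto
  have ch: "comp C \<pi> \<sigma> \<in> hom C (dom C \<sigma>) (cod C \<pi>)"
    using cat_comp[OF cat _ hom_I[OF \<pi>M], of \<sigma> "dom C \<sigma>"] c \<sigma>M by (simp add: hom_def)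
  show ?thesis unfolding universal_def
  proof (intro conjI ballI impI)
    show "comp C \<pi> \<sigma> \<in> Mor C" using ch by (simp add: hom_def)
    fix g assume gM: "g \<in> Mor C" and gc: "cod C g = cod C (comp C \<pi> \<sigma>)"
    hence "cod C g = cod C \<pi>" using ch by (simp add: hom_def)
    hence "has_pullback C \<pi> g" using u1 gM unfolding universal_def by auto
    then obtain p1 q1 where pb1: "is_pullback C \<pi> g p1 q1" unfolding has_pullback_def by blast
    note P1 = pbD[OF pb1]
    have "q1 \<in> Mor C" "cod C q1 = cod C \<sigma>" using P1(5) c by (auto simp: hom_def)
    hence "has_pullback C \<sigma> q1" using u2 unfolding universal_def by auto
    then obtain p2 q2 where pb2: "is_pullback C \<sigma> q1 p2 q2" unfolding has_pullback_def by blast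
    show "has_pullback C (comp C \<pi> \<sigma>) g"
      using pasting_comp[OF cat pb1 pb2] unfolding has_pullback_def by blast
  qed
qed

lemma ls_comp:
  assumes cat: "is_category C" and top: "is_topology C T"
    and l1: "locally_split C T \<pi>" and l2: "locally_split C T \<sigma>" and c: "cod C \<sigma> = dom C \<pi>"
  shows "locally_split C T (comp C \<pi> \<sigma>)"
proof -
  obtain F where F: "F \<in> T (cod C \<pi>)" "\<forall>f\<in>F. \<exists>\<rho>\<in>hom C (dom C f) (dom C \<pi>). comp C \<pi> \<rho> = f"
    and \<pi>M: "\<pi> \<in> Mor C" using l1 unfolding locally_split_def by blast
  obtain G where G: "G \<in> T (dom C \<pi>)" "\<forall>g\<in>G. \<exists>\<tau>\<in>hom C (dom C g) (dom C \<sigma>). comp C \<sigma> \<tau> = g"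
    and \<sigma>M: "\<sigma> \<in> Mor C" using l2 c unfolding locally_split_def by auto
  define \<rho> where "\<rho> f = (SOME \<rho>. \<rho> \<in> hom C (dom C f) (dom C \<pi>) \<and> comp C \<pi> \<rho> = f)" for f
  define \<tau> where "\<tau> g = (SOME \<tau>. \<tau> \<in> hom C (dom C g) (dom C \<sigma>) \<and> comp C \<sigma> \<tau> = g)" for g
  have \<rho>: "\<rho> f \<in> hom C (dom C f) (dom C \<pi>) \<and> comp C \<pi> (\<rho> f) = f" if "f \<in> F" for f
    unfolding \<rho>_def by (rule someI_ex) (use F that in blast)
  have \<tau>: "\<tau> g \<in> hom C (dom C g) (dom C \<sigma>) \<and> comp C \<sigma> (\<tau> g) = g" if "g \<in> G" for g
    unfolding \<tau>_def by (rule someI_ex) (use G that in blast)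
  define Pf where "Pf f g = (SOME p. \<exists>q. is_pullback C g (\<rho> f) p q)" for f g
  define Qf where "Qf f g = (SOME q. is_pullback C g (\<rho> f) (Pf f g) q)" for f g
  have pb: "is_pullback C g (\<rho> f) (Pf f g) (Qf f g)" if "f \<in> F" "g \<in> G" for f g
  proof -
    have "\<rho> f \<in> Mor C" "cod C (\<rho> f) = dom C \<pi>" using \<rho>[OF that(1)] by (auto simp: hom_def)
    hence "has_pullback C g (\<rho> f)" using topD4a[OF top G(1)] that(2) by blast
    hence "\<exists>p q. is_pullback C g (\<rho> f) p q" unfolding has_pullback_def .
    hence "\<exists>q. is_pullback C g (\<rho> f) (Pf f g) q" unfolding Pf_def by (rule someI_ex)
    thus ?thesis unfolding Qf_def by (rule someI_ex)
  qed
  have cov: "Pf f ` G \<in> T (dom C f)" if "f \<in> F" for f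
  proof -
    have "\<rho> f \<in> Mor C" "cod C (\<rho> f) = dom C \<pi>" "dom C (\<rho> f) = dom C f"
      using \<rho>[OF that(1)] by (auto simp: hom_def)
    thus ?thesis using topD4b[OF top G(1), of "\<rho> f" "Pf f" "Qf f"] pb[OF that] by simp
  qed
  define H where "H = {comp C f h | f h. f \<in> F \<and> h \<in> Pf f ` G}"
  have HT: "H \<in> T (cod C \<pi>)" unfolding H_def using topD3[OF top F(1), of "\<lambda>f. Pf f ` G"] cov by blast
  have \<sigma>h: "\<sigma> \<in> hom C (dom C \<sigma>) (dom C \<pi>)" using \<sigma>M c by (simp add: hom_def)
  have \<pi>h: "\<pi> \<in> hom C (dom C \<pi>) (cod C \<pi>)" using \<pi>M by (simp add: hom_def)
  have ch: "comp C \<pi> \<sigma> \<in> hom C (dom C \<sigma>) (cod C \<pi>)" using cat_comp[OF cat \<sigma>h \<pi>h] .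
  show ?thesis unfolding locally_split_def
  proof (intro conjI bexI[of _ H] ballI)
    show "comp C \<pi> \<sigma> \<in> Mor C" using ch by (simp add: hom_def)
    show "H \<in> T (cod C (comp C \<pi> \<sigma>))" using HT ch by (simp add: hom_def)
    fix k assume "k \<in> H"
    then obtain f g where f: "f \<in> F" and g: "g \<in> G" and k: "k = comp C f (Pf f g)"
      unfolding H_def by blast
    note P = pbD[OF pb[OF f g]]
    have fh: "f \<in> hom C (dom C f) (cod C \<pi>)" using topD1[OF top F(1)] f by (simp add: hom_def)
    have \<rho>h: "\<rho> f \<in> hom C (dom C f) (dom C \<pi>)" and \<rho>e: "comp C \<pi> (\<rho> f) = f" using \<rho>[OF f] by auto
    have \<tau>h: "\<tau> g \<in> hom C (dom C g) (dom C \<sigma>)" and \<tau>e: "comp C \<sigma> (\<tau> g) = g" using \<tau>[OF g] by auto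
    have gh: "g \<in> hom C (dom C g) (dom C \<pi>)" using topD1[OF top G(1)] g by (simp add: hom_def)
    define D where "D = dom C (Pf f g)"
    have Ph: "Pf f g \<in> hom C D (dom C f)" using P(4) \<rho>h by (simp add: hom_def D_def)
    have Qh: "Qf f g \<in> hom C D (dom C g)" using P(5) by (simp add: D_def)
    have eq: "comp C g (Qf f g) = comp C (\<rho> f) (Pf f g)" using P(6) .
    have kh: "k \<in> hom C D (cod C \<pi>)" using cat_comp[OF cat Ph fh] k by simp
    have lh: "comp C (\<tau> g) (Qf f g) \<in> hom C D (dom C \<sigma>)" using cat_comp[OF cat Qh \<tau>h] .
    have "comp C (comp C \<pi> \<sigma>) (comp C (\<tau> g) (Qf f g)) = comp C \<pi> (comp C \<sigma> (comp C (\<tau> g) (Qf f g)))"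
      using cat_assoc[OF cat lh \<sigma>h \<pi>h] by simp
    also have "\<dots> = comp C \<pi> (comp C (comp C \<sigma> (\<tau> g)) (Qf f g))"
      using cat_assoc[OF cat Qh \<tau>h \<sigma>h] by simp
    also have "\<dots> = comp C \<pi> (comp C (\<rho> f) (Pf f g))" using \<tau>e eq by simp
    also have "\<dots> = comp C (comp C \<pi> (\<rho> f)) (Pf f g)" using cat_assoc[OF cat Ph \<rho>h \<pi>h] by simp
    also have "\<dots> = k" using \<rho>e k by simp
    finally have e: "comp C (comp C \<pi> \<sigma>) (comp C (\<tau> g) (Qf f g)) = k" .
    have "dom C k = D" "dom C (comp C \<pi> \<sigma>) = dom C \<sigma>" using kh ch by (auto simp: hom_def)
    thus "\<exists>\<rho>\<in>hom C (dom C k) (dom C (comp C \<pi> \<sigma>)). comp C (comp C \<pi> \<sigma>) \<rho> = k"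
      using lh e by auto
  qed
qed

lemma ls_pb:
  assumes cat: "is_category C" and top: "is_topology C T"
    and l: "locally_split C T \<pi>" and gM: "g \<in> Mor C" and pb: "is_pullback C \<pi> g p q"
  shows "locally_split C T p"
proof -
  note P = pbD[OF pb] pbE[OF pb]
  obtain F where F: "F \<in> T (cod C \<pi>)" "\<forall>f\<in>F. \<exists>\<rho>\<in>hom C (dom C f) (dom C \<pi>). comp C \<pi> \<rho> = f"
    and \<pi>M: "\<pi> \<in> Mor C" using l unfolding locally_split_def by blast
  define \<rho> where "\<rho> f = (SOME \<rho>. \<rho> \<in> hom C (dom C f) (dom C \<pi>) \<and> comp C \<pi> \<rho> = f)" for f
  have \<rho>: "\<rho> f \<in> hom C (dom C f) (dom C \<pi>) \<and> comp C \<pi> (\<rho> f) = f" if "f \<in> F" for f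
    unfolding \<rho>_def by (rule someI_ex) (use F that in blast)
  define Pf where "Pf f = (SOME p. \<exists>q. is_pullback C f g p q)" for f
  define Qf where "Qf f = (SOME q. is_pullback C f g (Pf f) q)" for f
  have gc: "cod C g = cod C \<pi>" using P(3) by simp
  have pbf: "is_pullback C f g (Pf f) (Qf f)" if "f \<in> F" for f
  proof -
    have "has_pullback C f g" using topD4a[OF top F(1) gM gc that] .
    hence "\<exists>p q. is_pullback C f g p q" unfolding has_pullback_def .
    hence "\<exists>q. is_pullback C f g (Pf f) q" unfolding Pf_def by (rule someI_ex)
    thus ?thesis unfolding Qf_def by (rule someI_ex)
  qed
  have cov: "Pf ` F \<in> T (dom C g)" using topD4b[OF top F(1) gM gc, of Pf Qf] pbf by blast
  have pc: "cod C p = dom C g" using P(4) by (simp add: hom_def)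
  show ?thesis unfolding locally_split_def
  proof (intro conjI bexI[of _ "Pf ` F"] ballI)
    show "p \<in> Mor C" using P(4) by (simp add: hom_def)
    show "Pf ` F \<in> T (cod C p)" using cov pc by simp
    fix k assume "k \<in> Pf ` F"
    then obtain f where f: "f \<in> F" and k: "k = Pf f" by blast
    note Q = pbD[OF pbf[OF f]]
    have fh: "f \<in> hom C (dom C f) (cod C \<pi>)" using topD1[OF top F(1)] f by (simp add: hom_def)
    have \<rho>h: "\<rho> f \<in> hom C (dom C f) (dom C \<pi>)" and \<rho>e: "comp C \<pi> (\<rho> f) = f" using \<rho>[OF f] by auto
    have \<pi>h: "\<pi> \<in> hom C (dom C \<pi>) (cod C \<pi>)" using \<pi>M by (simp add: hom_def)
    define D where "D = dom C (Pf f)"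
    have DO: "D \<in> Obj C" using Q(4) cat_obj[OF cat] unfolding hom_def D_def by blast
    have Ph: "Pf f \<in> hom C D (dom C g)" using Q(4) by (simp add: D_def)
    have Qh: "Qf f \<in> hom C D (dom C f)" using Q(5) by (simp add: D_def)
    have bh: "comp C (\<rho> f) (Qf f) \<in> hom C D (dom C \<pi>)" using cat_comp[OF cat Qh \<rho>h] .
    have e: "comp C \<pi> (comp C (\<rho> f) (Qf f)) = comp C g (Pf f)"
      using cat_assoc[OF cat Qh \<rho>h \<pi>h] \<rho>e Q(6) by simp
    obtain u where "u \<in> hom C D (dom C p)" "comp C p u = Pf f" using P(7)[OF DO Ph bh e] by blast
    thus "\<exists>\<rho>\<in>hom C (dom C k) (dom C p). comp C p \<rho> = k" using k D_def by auto
  qed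
qed

lemma Uni_mem: "A \<in> Uni C T X \<longleftrightarrow> (\<exists>\<pi>. A = {\<pi>} \<and> \<pi> \<in> Mor C \<and> cod C \<pi> = X \<and> universal C \<pi> \<and> locally_split C T \<pi>)"
  by (simp add: Uni_def)

lemma ls_Uni_iff:
  assumes cat: "is_category C" and u: "universal C \<pi>"
  shows "locally_split C (Uni C T) \<pi> \<longleftrightarrow> locally_split C T \<pi>"
proof
  have \<pi>M: "\<pi> \<in> Mor C" using u by (simp add: universal_def)
  have \<pi>h: "\<pi> \<in> hom C (dom C \<pi>) (cod C \<pi>)" using \<pi>M by (simp add: hom_def)
  assume "locally_split C (Uni C T) \<pi>"
  then obtain F where F: "F \<in> Uni C T (cod C \<pi>)" "\<forall>f\<in>F. \<exists>\<rho>\<in>hom C (dom C f) (dom C \<pi>). comp C \<pi> \<rho> = f"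
    unfolding locally_split_def by blast
  then obtain \<sigma> where \<sigma>: "F = {\<sigma>}" "\<sigma> \<in> Mor C" "cod C \<sigma> = cod C \<pi>" "locally_split C T \<sigma>"
    unfolding Uni_mem by blast
  obtain \<rho> where \<rho>: "\<rho> \<in> hom C (dom C \<sigma>) (dom C \<pi>)" "comp C \<pi> \<rho> = \<sigma>" using F(2) \<sigma>(1) by blast
  obtain G where G: "G \<in> T (cod C \<sigma>)" "\<forall>g\<in>G. \<exists>\<tau>\<in>hom C (dom C g) (dom C \<sigma>). comp C \<sigma> \<tau> = g"
    using \<sigma>(4) unfolding locally_split_def by blast
  show "locally_split C T \<pi>" unfolding locally_split_def
  proof (intro conjI bexI[of _ G] ballI)
    show "\<pi> \<in> Mor C" by (rule \<pi>M)
    show "G \<in> T (cod C \<pi>)" using G(1) \<sigma>(3) by simp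
    fix g assume g: "g \<in> G"
    then obtain \<tau> where \<tau>: "\<tau> \<in> hom C (dom C g) (dom C \<sigma>)" "comp C \<sigma> \<tau> = g" using G(2) by blast
    have "comp C \<pi> (comp C \<rho> \<tau>) = g" using cat_assoc[OF cat \<tau>(1) \<rho>(1) \<pi>h] \<rho>(2) \<tau>(2) by simp
    thus "\<exists>\<rho>\<in>hom C (dom C g) (dom C \<pi>). comp C \<pi> \<rho> = g" using cat_comp[OF cat \<tau>(1) \<rho>(1)] by blast
  qed
next
  have \<pi>M: "\<pi> \<in> Mor C" using u by (simp add: universal_def)
  assume l: "locally_split C T \<pi>"
  have "{\<pi>} \<in> Uni C T (cod C \<pi>)" unfolding Uni_mem using \<pi>M u l by blast
  moreover have "ident C (dom C \<pi>) \<in> hom C (dom C \<pi>) (dom C \<pi>)" using cat_id[OF cat] cat_obj[OF cat \<pi>M] by blast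
  moreover have "comp C \<pi> (ident C (dom C \<pi>)) = \<pi>" using cat_idr[OF cat] \<pi>M by (simp add: hom_def)
  ultimately show "locally_split C (Uni C T) \<pi>" unfolding locally_split_def using \<pi>M by blast
qed

lemma Uni_top:
  assumes cat: "is_category C" and top: "is_topology C T"
  shows "is_topology C (Uni C T)"
  unfolding is_topology_def
proof (intro conjI allI impI ballI)
  fix X F assume "F \<in> Uni C T X"
  then obtain \<pi> where \<pi>: "F = {\<pi>}" "\<pi> \<in> Mor C" "cod C \<pi> = X" unfolding Uni_mem by blast
  show "X \<in> Obj C" using cat_obj[OF cat \<pi>(2)] \<pi>(3) by simp
  show "f \<in> Mor C" if "f \<in> F" for f using that \<pi> by auto
  show "cod C f = X" if "f \<in> F" for f using that \<pi> by auto
next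
  fix f assume iso: "is_iso C f"
  have fT: "{f} \<in> T (cod C f)" using topD2[OF top iso] .
  have fM: "f \<in> Mor C" using iso by (simp add: is_iso_def)
  have u: "universal C f" unfolding universal_def using fM topD4a[OF top fT] by blast
  have "ident C (dom C f) \<in> hom C (dom C f) (dom C f)" using cat_id[OF cat] cat_obj[OF cat fM] by blast
  moreover have "comp C f (ident C (dom C f)) = f" using cat_idr[OF cat] fM by (simp add: hom_def)
  ultimately have "locally_split C T f" unfolding locally_split_def using fM fT by blast
  thus "{f} \<in> Uni C T (cod C f)" unfolding Uni_mem using fM u by blast
next
  fix X F G assume F: "F \<in> Uni C T X" and G: "\<forall>f\<in>F. G f \<in> Uni C T (dom C f)"
  then obtain \<pi> where \<pi>: "F = {\<pi>}" "\<pi> \<in> Mor C" "cod C \<pi> = X" "universal C \<pi>" "locally_split C T \<pi>"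
    unfolding Uni_mem by blast
  then obtain \<sigma> where \<sigma>: "G \<pi> = {\<sigma>}" "\<sigma> \<in> Mor C" "cod C \<sigma> = dom C \<pi>" "universal C \<sigma>" "locally_split C T \<sigma>"
    using G unfolding Uni_mem by blast
  have eq: "{comp C f h |f h. f \<in> F \<and> h \<in> G f} = {comp C \<pi> \<sigma>}" using \<pi>(1) \<sigma>(1) by auto
  have ch: "comp C \<pi> \<sigma> \<in> hom C (dom C \<sigma>) (cod C \<pi>)"
    using cat_comp[OF cat _ hom_I[OF \<pi>(2)], of \<sigma> "dom C \<sigma>"] \<sigma>(2,3) by (simp add: hom_def)
  have "{comp C \<pi> \<sigma>} \<in> Uni C T X" unfolding Uni_mem
    using ch \<pi>(3) univ_comp[OF cat \<pi>(4) \<sigma>(4) \<sigma>(3)] ls_comp[OF cat top \<pi>(5) \<sigma>(5) \<sigma>(3)]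
    by (auto simp: hom_def)
  thus "{comp C f h |f h. f \<in> F \<and> h \<in> G f} \<in> Uni C T X" using eq by simp
next
  fix X F g assume F: "F \<in> Uni C T X" and gM: "g \<in> Mor C" and gc: "cod C g = X"
  then obtain \<pi> where \<pi>: "F = {\<pi>}" "\<pi> \<in> Mor C" "cod C \<pi> = X" "universal C \<pi>" "locally_split C T \<pi>"
    unfolding Uni_mem by blast
  show "has_pullback C f g" if "f \<in> F" for f using that \<pi> gM gc unfolding universal_def by auto
  show "p ` F \<in> Uni C T (dom C g)" if "\<forall>f\<in>F. is_pullback C f g (p f) (q f)" for p q
  proof -
    have pb: "is_pullback C \<pi> g (p \<pi>) (q \<pi>)" using that \<pi>(1) by simp
    note P = pbD[OF pb]
    have "{p \<pi>} \<in> Uni C T (dom C g)" unfolding Uni_mem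
      using P(4) univ_pb[OF cat \<pi>(4) pb] ls_pb[OF cat top \<pi>(5) gM pb] by (auto simp: hom_def)
    thus "p ` F \<in> Uni C T (dom C g)" using \<pi>(1) by simp
  qed
qed

theorem mainTheorem8:
  fixes C :: "('o, 'm) category" and T T1 T2 :: "('o, 'm) coverage"
  assumes "is_category C" and "is_topology C T"
    and "is_topology C T1" and "is_topology C T2"
  shows "(is_topology C (Uni C T) \<and> singleton_cov (Uni C T) \<and> top_equiv C (Uni C T) T)
    \<and> (top_prec C T1 T2 \<longleftrightarrow> top_subset (Uni C T1) (Uni C T2))
    \<and> (top_equiv C T1 T2 \<longleftrightarrow> Uni C T1 = Uni C T2)
    \<and> (singleton_cov T \<longrightarrow> top_subset T (Uni C T))
    \<and> Uni C (Uni C T) = Uni C T"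
proof -
  note cat = assms(1) and top = assms(2)
  have A1: "is_topology C (Uni C T)" using Uni_top[OF cat top] .
  have A2: "singleton_cov (Uni C T)" unfolding singleton_cov_def Uni_mem by blast
  have A3: "top_equiv C (Uni C T) T" unfolding top_equiv_def top_prec_def
  proof (intro conjI allI impI)
    fix \<pi> assume H: "universal C \<pi> \<and> locally_split C (Uni C T) \<pi>"
    thus "locally_split C T \<pi>" using ls_Uni_iff[OF cat, of \<pi> T] by simp
  next
    fix \<pi> assume H: "universal C \<pi> \<and> locally_split C T \<pi>"
    thus "locally_split C (Uni C T) \<pi>" using ls_Uni_iff[OF cat, of \<pi> T] by simp
  qed
  have B: "top_prec C T1 T2 \<longleftrightarrow> top_subset (Uni C T1) (Uni C T2)" for T1 T2 :: "('o, 'm) coverage"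
  proof
    assume H: "top_prec C T1 T2"
    show "top_subset (Uni C T1) (Uni C T2)" unfolding top_subset_def
    proof (intro allI subsetI)
      fix X A assume "A \<in> Uni C T1 X"
      then obtain \<pi> where \<pi>: "A = {\<pi>}" "\<pi> \<in> Mor C" "cod C \<pi> = X" "universal C \<pi>" "locally_split C T1 \<pi>"
        unfolding Uni_mem by blast
      have "locally_split C T2 \<pi>" using H \<pi>(4,5) unfolding top_prec_def by blast
      thus "A \<in> Uni C T2 X" unfolding Uni_mem using \<pi> by blast
    qed
  next
    assume H: "top_subset (Uni C T1) (Uni C T2)"
    show "top_prec C T1 T2" unfolding top_prec_def
    proof (intro allI impI)
      fix \<pi> assume "universal C \<pi> \<and> locally_split C T1 \<pi>"
      hence "{\<pi>} \<in> Uni C T1 (cod C \<pi>)" unfolding Uni_mem universal_def by blast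
      hence "{\<pi>} \<in> Uni C T2 (cod C \<pi>)" using H unfolding top_subset_def by blast
      thus "locally_split C T2 \<pi>" unfolding Uni_mem by auto
    qed
  qed
  have Bi: "top_equiv C T1 T2 \<longleftrightarrow> Uni C T1 = Uni C T2"
    unfolding top_equiv_def B top_subset_def fun_eq_iff set_eq_subset by blast
  have Cc: "singleton_cov T \<longrightarrow> top_subset T (Uni C T)"
  proof
    assume s: "singleton_cov T"
    show "top_subset T (Uni C T)" unfolding top_subset_def
    proof (intro allI subsetI)
      fix X F assume F: "F \<in> T X"
      then obtain f where f: "F = {f}" using s unfolding singleton_cov_def by blast
      have fM: "f \<in> Mor C" and fc: "cod C f = X" using topD1[OF top F] f by auto
      have fT: "{f} \<in> T (cod C f)" using F f fc by simp
      have u: "universal C f" unfolding universal_def using fM topD4a[OF top fT] by blast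
      have "ident C (dom C f) \<in> hom C (dom C f) (dom C f)" using cat_id[OF cat] cat_obj[OF cat fM] by blast
      moreover have "comp C f (ident C (dom C f)) = f" using cat_idr[OF cat] fM by (simp add: hom_def)
      ultimately have "locally_split C T f" unfolding locally_split_def using fM fT by blast
      thus "F \<in> Uni C T X" unfolding Uni_mem using fM u f fc by blast
    qed
  qed
  have D: "Uni C (Uni C T) = Uni C T"
  proof (rule ext, rule set_eqI)
    fix X A
    show "A \<in> Uni C (Uni C T) X \<longleftrightarrow> A \<in> Uni C T X"
    proof
      assume "A \<in> Uni C (Uni C T) X"
      then obtain \<pi> where \<pi>: "A = {\<pi>}" "\<pi> \<in> Mor C" "cod C \<pi> = X" "universal C \<pi>"
        "locally_split C (Uni C T) \<pi>" unfolding Uni_mem by blast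
      have "locally_split C T \<pi>" using \<pi>(5) ls_Uni_iff[OF cat \<pi>(4), of T] by simp
      thus "A \<in> Uni C T X" unfolding Uni_mem using \<pi> by blast
    next
      assume "A \<in> Uni C T X"
      then obtain \<pi> where \<pi>: "A = {\<pi>}" "\<pi> \<in> Mor C" "cod C \<pi> = X" "universal C \<pi>"
        "locally_split C T \<pi>" unfolding Uni_mem by blast
      have "locally_split C (Uni C T) \<pi>" using \<pi>(5) ls_Uni_iff[OF cat \<pi>(4), of T] by simp
      thus "A \<in> Uni C (Uni C T) X" unfolding Uni_mem using \<pi> by blast
    qed
  qed
  show ?thesis using A1 A2 A3 B Bi Cc D by blast
qed

end
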